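(* For real $\alpha\ne3$ let $$\Phi_\alpha(X)=\frac{1}{3-\alpha}\big(\sigma_1X\sigma_1+\sigma_2X\sigma_2+\sigma_3X\sigma_3-\alpha X\big),\qquad X\in M_2(\mathbb{C}).$$ Then $\Phi_\alpha$ is positive if and only if $\alpha\le1$; it is a Schwarz map if and only if $\alpha\le\frac13$; and it is completely positive if and only if $\alpha\le0$.
   Context: $\sigma_1,\sigma_2,\sigma_3$ are the Pauli matrices; $\Phi_\alpha$ is unital. A unital linear map $\Phi$ is a Schwarz map if $\Phi(X^\dagger X)\ge\Phi(X^\dagger)\Phi(X)$ (in the positive semidefinite order) for all $X\in M_2(\mathbb{C})$. *)

theory Defs
  imports "Jordan_Normal_Form.Schur_Decomposition"
begin

definition psd :: "complex mat \<Rightarrow> bool" where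
  "psd A \<longleftrightarrow> square_mat A \<and> mat_adjoint A = A \<and>
     (\<forall>v \<in> carrier_vec (dim_row A). 0 \<le> Re (scalar_prod (conjugate v) (A *\<^sub>v v)))"

definition sigma1 :: "complex mat" where
  "sigma1 = mat_of_rows_list 2 [[0, 1], [1, 0]]"
definition sigma2 :: "complex mat" where
  "sigma2 = mat_of_rows_list 2 [[0, -\<i>], [\<i>, 0]]"
definition sigma3 :: "complex mat" where
  "sigma3 = mat_of_rows_list 2 [[1, 0], [0, -1]]"

definition Phi :: "real \<Rightarrow> complex mat \<Rightarrow> complex mat" where
  "Phi \<alpha> X = complex_of_real (1 / (3 - \<alpha>)) \<cdot>\<^sub>m
     (sigma1 * X * sigma1 + sigma2 * X * sigma2 + sigma3 * X * sigma3
      - complex_of_real \<alpha> \<cdot>\<^sub>m X)"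

text \<open>Maps on M_2(C); only their values on 2x2 matrices matter.\<close>
definition positive_map :: "(complex mat \<Rightarrow> complex mat) \<Rightarrow> bool" where
  "positive_map \<Phi> \<longleftrightarrow> (\<forall>X \<in> carrier_mat 2 2. psd X \<longrightarrow> psd (\<Phi> X))"

definition schwarz_map :: "(complex mat \<Rightarrow> complex mat) \<Rightarrow> bool" where
  "schwarz_map \<Phi> \<longleftrightarrow> (\<forall>X \<in> carrier_mat 2 2.
     psd (\<Phi> (mat_adjoint X * X) - \<Phi> (mat_adjoint X) * \<Phi> X))"

text \<open>Ampliation id_n \<otimes> \<Phi>: a (2n)x(2n) matrix is viewed as an n x n block matrix with
  2x2 blocks, and \<Phi> is applied to every block.\<close>
definition ampliation :: "nat \<Rightarrow> (complex mat \<Rightarrow> complex mat) \<Rightarrow> complex mat \<Rightarrow> complex mat" where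
  "ampliation n \<Phi> X = mat (2*n) (2*n) (\<lambda>(i, j).
     \<Phi> (mat 2 2 (\<lambda>(a, b). X $$ (2 * (i div 2) + a, 2 * (j div 2) + b))) $$ (i mod 2, j mod 2))"

definition completely_positive :: "(complex mat \<Rightarrow> complex mat) \<Rightarrow> bool" where
  "completely_positive \<Phi> \<longleftrightarrow>
     (\<forall>n. \<forall>X \<in> carrier_mat (2*n) (2*n). psd X \<longrightarrow> psd (ampliation n \<Phi> X))"

end

theory Submission
  imports Defs
begin

definition mat2 :: "complex \<Rightarrow> complex \<Rightarrow> complex \<Rightarrow> complex \<Rightarrow> complex mat" where
  "mat2 a b c d = mat 2 2 (\<lambda>(i,j). if i = 0 then (if j = 0 then a else b) else (if j = 0 then c else d))"

lemma mat2_carrier[simp]: "mat2 a b c d \<in> carrier_mat 2 2" "dim_row (mat2 a b c d) = 2" "dim_col (mat2 a b c d) = 2"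
  by (auto simp: mat2_def)

lemma mat2_idx[simp]: "mat2 a b c d $$ (0,0) = a" "mat2 a b c d $$ (0,1) = b"
  "mat2 a b c d $$ (1,0) = c" "mat2 a b c d $$ (1,1) = d"
  by (auto simp: mat2_def)

lemma mat2_idx'[simp]: "mat2 a b c d $$ (0,Suc 0) = b"
  "mat2 a b c d $$ (Suc 0,0) = c" "mat2 a b c d $$ (Suc 0,Suc 0) = d"
  by (auto simp: mat2_def)

lemma less2: "(i::nat) < 2 \<longleftrightarrow> i = 0 \<or> i = 1" by auto

lemma sum2: "(\<Sum>i::nat=0..<2. f i) = f 0 + (f 1 :: 'a::comm_monoid_add)" by (simp add: numeral_2_eq_2)

lemma mat2_eta: "X \<in> carrier_mat 2 2 \<Longrightarrow> X = mat2 (X$$(0,0)) (X$$(0,1)) (X$$(1,0)) (X$$(1,1))"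
  by (rule eq_matI) (auto simp: mat2_def less2)

lemma mat2_mult: "mat2 a b c d * mat2 e f g h = mat2 (a*e+b*g) (a*f+b*h) (c*e+d*g) (c*f+d*h)"
  by (rule eq_matI) (auto simp: mat2_def less2 scalar_prod_def row_def col_def sum2)

lemma mat2_add: "mat2 a b c d + mat2 e f g h = mat2 (a+e) (b+f) (c+g) (d+h)"
  by (rule eq_matI) (auto simp: mat2_def less2)

lemma mat2_minus: "mat2 a b c d - mat2 e f g h = mat2 (a-e) (b-f) (c-g) (d-h)"
  by (rule eq_matI) (auto simp: mat2_def less2)

lemma mat2_smult: "k \<cdot>\<^sub>m mat2 a b c d = mat2 (k*a) (k*b) (k*c) (k*d)"
  by (rule eq_matI) (auto simp: mat2_def less2)

lemma mat2_adj: "mat_adjoint (mat2 a b c d) = mat2 (cnj a) (cnj c) (cnj b) (cnj d)"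
  by (rule eq_matI) (auto simp: mat2_def less2 mat_adjoint_def mat_of_rows_def col_def)

lemma sigmas: "sigma1 = mat2 0 1 1 0" "sigma2 = mat2 0 (-\<i>) \<i> 0" "sigma3 = mat2 1 0 0 (-1)"
  by (rule eq_matI; auto simp: mat2_def less2 sigma1_def sigma2_def sigma3_def mat_of_rows_list_def)+

lemma mat2_cong: "a=a' \<Longrightarrow> b=b' \<Longrightarrow> c=c' \<Longrightarrow> d=d' \<Longrightarrow> mat2 a b c d = mat2 a' b' c' d'" by simp

lemma Phi_aux:
  assumes h: "k*c = 3*k - 1"
  shows "k \<cdot>\<^sub>m (sigma1 * mat2 x y z w * sigma1 + sigma2 * mat2 x y z w * sigma2 + sigma3 * mat2 x y z w * sigma3
      - c \<cdot>\<^sub>m mat2 x y z w) = mat2 ((1-2*k)*x + 2*k*w) ((1-4*k)*y) ((1-4*k)*z) (2*k*x+(1-2*k)*w)"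
proof -
  have h': "\<And>t. c*(k*t) = (3*k-1)*t" using h by (metis mult.assoc mult.commute)
  show ?thesis unfolding sigmas mat2_mult mat2_add mat2_minus mat2_smult
    by (rule mat2_cong; simp add: algebra_simps; simp add: h' algebra_simps)
qed

lemma Phi_mat2:
  assumes "\<alpha> \<noteq> 3"
  shows "Phi \<alpha> (mat2 x y z w) = (let a = complex_of_real (2/(3-\<alpha>)) in
      mat2 ((1-a)*x + a*w) ((1-2*a)*y) ((1-2*a)*z) (a*x+(1-a)*w))"
proof -
  have r: "1/(3-\<alpha>) * \<alpha> = 3*(1/(3-\<alpha>)) - 1" using assms by (simp add: field_simps)
  have e: "complex_of_real (1/(3-\<alpha>)) * (complex_of_real \<alpha>) = 3 * complex_of_real (1/(3-\<alpha>)) - 1"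
    by (metis r of_real_mult of_real_diff of_real_1 of_real_numeral)
  have a: "complex_of_real (2/(3-\<alpha>)) = 2 * complex_of_real (1/(3-\<alpha>))"
    by (metis times_divide_eq_right mult_1_right of_real_mult of_real_numeral)
  show ?thesis unfolding Phi_def Phi_aux[OF e] Let_def a by (simp add: algebra_simps)
qed

definition Q :: "complex \<Rightarrow> complex \<Rightarrow> complex \<Rightarrow> complex \<Rightarrow> complex \<Rightarrow> complex \<Rightarrow> complex" where
  "Q a b c d x y = cnj x*(a*x+b*y) + cnj y*(c*x+d*y)"

lemma qf_expand:
  assumes "A \<in> carrier_mat m m" "v \<in> carrier_vec m"
  shows "scalar_prod (conjugate v) (A *\<^sub>v v) = (\<Sum>i<m. cnj (v$i) * (\<Sum>j<m. A$$(i,j) * v$j))"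
proof -
  have dA: "dim_row A = m" "dim_col A = m" and dv: "dim_vec v = m" using assms by auto
  have 1: "\<And>i. i<m \<Longrightarrow> (A *\<^sub>v v)$i = (\<Sum>j<m. A$$(i,j)*v$j)"
  proof -
    fix i assume i: "i < m"
    have "(A *\<^sub>v v)$i = row A i \<bullet> v" using i dA by simp
    also have "\<dots> = (\<Sum>j\<in>{0..<m}. row A i $ j * v $ j)" unfolding scalar_prod_def dv ..
    also have "\<dots> = (\<Sum>j<m. A$$(i,j)*v$j)" using i dA by (auto simp: atLeast0LessThan intro!: sum.cong)
    finally show "(A *\<^sub>v v)$i = (\<Sum>j<m. A$$(i,j)*v$j)" .
  qed
  have "scalar_prod (conjugate v) (A *\<^sub>v v) = (\<Sum>i\<in>{0..<m}. conjugate v $ i * (A *\<^sub>v v) $ i)"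
    unfolding scalar_prod_def using dA by simp
  also have "\<dots> = (\<Sum>i<m. cnj (v$i) * (\<Sum>j<m. A$$(i,j) * v$j))"
    using 1 dv by (auto simp: atLeast0LessThan intro!: sum.cong)
  finally show ?thesis .
qed

lemma sum2': "(\<Sum>i::nat<2. f i) = f 0 + (f 1 :: 'a::comm_monoid_add)" by (simp add: numeral_2_eq_2)

lemma qf_mat2: "v \<in> carrier_vec 2 \<Longrightarrow> scalar_prod (conjugate v) (mat2 a b c d *\<^sub>v v) = Q a b c d (v$0) (v$1)"
  by (simp only: qf_expand[OF mat2_carrier(1)] sum2' mat2_idx Q_def)

lemma vec2_ex: "\<exists>v\<in>carrier_vec 2. v$0 = x \<and> v$1 = (y::complex)"
  by (rule bexI[of _ "vec 2 (\<lambda>i. if i = 0 then x else y)"]) auto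

lemma mat2_inj: "mat2 a b c d = mat2 a' b' c' d' \<longleftrightarrow> a=a' \<and> b=b' \<and> c=c' \<and> d=d'"
  by (metis mat2_idx)

lemma psd_mat2: "psd (mat2 a b c d) \<longleftrightarrow> (cnj a = a \<and> cnj d = d \<and> c = cnj b) \<and> (\<forall>x y. 0 \<le> Re (Q a b c d x y))"
proof -
  have "mat_adjoint (mat2 a b c d) = mat2 a b c d \<longleftrightarrow> (cnj a = a \<and> cnj d = d \<and> c = cnj b)"
    unfolding mat2_adj mat2_inj by (metis complex_cnj_cnj)
  moreover have "(\<forall>v \<in> carrier_vec 2. 0 \<le> Re (scalar_prod (conjugate v) (mat2 a b c d *\<^sub>v v)))
     \<longleftrightarrow> (\<forall>x y. 0 \<le> Re (Q a b c d x y))"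
  proof
    assume h: "\<forall>v \<in> carrier_vec 2. 0 \<le> Re (scalar_prod (conjugate v) (mat2 a b c d *\<^sub>v v))"
    show "\<forall>x y. 0 \<le> Re (Q a b c d x y)"
    proof (intro allI)
      fix x y :: complex
      obtain v where v: "v \<in> carrier_vec 2" "v$0 = x" "v$1 = y" using vec2_ex[of x y] by blast
      show "0 \<le> Re (Q a b c d x y)" using h[rule_format, OF v(1)] v
        by (simp add: qf_mat2)
    qed
  next
    assume h: "\<forall>x y. 0 \<le> Re (Q a b c d x y)"
    show "\<forall>v \<in> carrier_vec 2. 0 \<le> Re (scalar_prod (conjugate v) (mat2 a b c d *\<^sub>v v))"
    proof
      fix v :: "complex vec" assume v: "v \<in> carrier_vec 2"
      show "0 \<le> Re (scalar_prod (conjugate v) (mat2 a b c d *\<^sub>v v))"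
        using h[rule_format, of "v$0" "v$1"] v
        by (simp add: qf_mat2)
    qed
  qed
  ultimately show ?thesis unfolding psd_def mat2_carrier(2) by (simp add: square_mat.simps)
qed

definition Phi2 :: "real \<Rightarrow> complex \<Rightarrow> complex \<Rightarrow> complex \<Rightarrow> complex \<Rightarrow> complex mat" where
  "Phi2 a x y z w = mat2 ((1-of_real a)*x + of_real a*w) ((1-2*of_real a)*y) ((1-2*of_real a)*z) (of_real a*x+(1-of_real a)*w)"

lemma Re_ofreal_mult: "Re (complex_of_real a * z) = a * Re z" by simp

lemma Q_pos_ident: "Q ((1-of_real a)*x + of_real a*w) ((1-2*of_real a)*y) ((1-2*of_real a)*z) (of_real a*x+(1-of_real a)*w) p q
   = of_real a * Q x y z w (cnj q) (- cnj p) + (1 - of_real a) * Q x y z w p q"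
  unfolding Q_def by (simp add: algebra_simps)

lemma positive2:
  assumes "0 \<le> a" "a \<le> 1" "psd (mat2 x y z w)"
  shows "psd (Phi2 a x y z w)"
proof -
  from assms(3) have H: "cnj x = x" "cnj w = w" "z = cnj y" and P: "\<And>p q. 0 \<le> Re (Q x y z w p q)"
    unfolding psd_mat2 by auto
  show ?thesis unfolding Phi2_def psd_mat2
  proof (intro conjI allI)
    fix p q
    have "Re (Q ((1-of_real a)*x + of_real a*w) ((1-2*of_real a)*y) ((1-2*of_real a)*z) (of_real a*x+(1-of_real a)*w) p q)
      = a * Re (Q x y z w (cnj q) (- cnj p)) + (1-a) * Re (Q x y z w p q)"
      unfolding Q_pos_ident by simp
    also have "\<dots> \<ge> 0" using P assms(1,2) by simp
    finally show "0 \<le> Re (Q ((1-of_real a)*x + of_real a*w) ((1-2*of_real a)*y) ((1-2*of_real a)*z) (of_real a*x+(1-of_real a)*w) p q)" .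
  qed (use H in \<open>simp_all\<close>)
qed

lemma positive2_fail:
  assumes "psd (Phi2 a 1 0 0 0)" shows "0 \<le> a \<and> a \<le> 1"
proof -
  have P: "\<And>p q. 0 \<le> Re (Q (1 - complex_of_real a) 0 0 (complex_of_real a) p q)"
    using assms unfolding Phi2_def psd_mat2 by simp
  from P[of 1 0] P[of 0 1] show ?thesis by (simp add: Q_def)
qed

definition N :: "complex \<Rightarrow> complex \<Rightarrow> complex \<Rightarrow> complex \<Rightarrow> complex \<Rightarrow> complex \<Rightarrow> complex" where
  "N x y z w p q = cnj ((x-w)*p + 2*y*q) * ((x-w)*p + 2*y*q) + cnj (2*z*p - (x-w)*q) * (2*z*p - (x-w)*q)"

lemma Re_cnj_sq: "0 \<le> Re (cnj u * u)"
proof -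
  have "Re (cnj u * u) = Re u ^ 2 + Im u ^ 2" by (simp add: power2_eq_square)
  then show ?thesis by simp
qed

lemma Re_N: "0 \<le> Re (N x y z w p q)"
  unfolding N_def using Re_cnj_sq by (simp only: plus_complex.sel) (meson add_nonneg_nonneg)

definition SD :: "real \<Rightarrow> complex \<Rightarrow> complex \<Rightarrow> complex \<Rightarrow> complex \<Rightarrow> complex mat" where
  "SD a x y z w = (let X = mat2 x y z w; Xa = mat_adjoint X; M = Xa * X in
     Phi2 a (M$$(0,0)) (M$$(0,1)) (M$$(1,0)) (M$$(1,1)) - Phi2 a (cnj x) (cnj z) (cnj y) (cnj w) * Phi2 a x y z w)"

lemma SD_Q: "4 * Q (SD a x y z w $$ (0,0)) (SD a x y z w $$ (0,1)) (SD a x y z w $$ (1,0)) (SD a x y z w $$ (1,1)) p q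
  = of_real a * N x y z w (cnj q) (- cnj p) + of_real a * (3 - 4 * of_real a) * N x y z w p q"
  unfolding SD_def Let_def mat2_adj mat2_mult Phi2_def mat2_minus mat2_idx Q_def N_def
  by (simp add: algebra_simps)

lemma SD_mat2: "SD a x y z w = mat2 (SD a x y z w $$ (0,0)) (SD a x y z w $$ (0,1)) (SD a x y z w $$ (1,0)) (SD a x y z w $$ (1,1))"
  unfolding SD_def Let_def mat2_adj mat2_mult Phi2_def mat2_minus mat2_idx by simp

lemma SD_herm: "cnj (SD a x y z w $$ (0,0)) = SD a x y z w $$ (0,0)" "cnj (SD a x y z w $$ (1,1)) = SD a x y z w $$ (1,1)"
   "SD a x y z w $$ (1,0) = cnj (SD a x y z w $$ (0,1))"
  unfolding SD_def Let_def mat2_adj mat2_mult Phi2_def mat2_minus mat2_idx by (simp_all add: algebra_simps)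

lemma schwarz2:
  assumes "0 \<le> a" "a \<le> 3/4"
  shows "psd (SD a x y z w)"
proof -
  have "0 \<le> Re (Q (SD a x y z w $$ (0,0)) (SD a x y z w $$ (0,1)) (SD a x y z w $$ (1,0)) (SD a x y z w $$ (1,1)) p q)" for p q
  proof -
    have e: "complex_of_real a * (3 - 4 * complex_of_real a) = complex_of_real (a * (3 - 4*a))" by simp
    have "4 * Re (Q (SD a x y z w $$ (0,0)) (SD a x y z w $$ (0,1)) (SD a x y z w $$ (1,0)) (SD a x y z w $$ (1,1)) p q)
       = Re (4 * Q (SD a x y z w $$ (0,0)) (SD a x y z w $$ (0,1)) (SD a x y z w $$ (1,0)) (SD a x y z w $$ (1,1)) p q)" by simp
    also have "\<dots> = a * Re (N x y z w (cnj q) (- cnj p)) + (a * (3 - 4*a)) * Re (N x y z w p q)"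
      unfolding SD_Q e by (simp only: plus_complex.sel Re_ofreal_mult)
    also have "\<dots> \<ge> 0" using assms Re_N by (intro add_nonneg_nonneg mult_nonneg_nonneg) auto
    finally show ?thesis by simp
  qed
  then show ?thesis apply (subst SD_mat2) unfolding psd_mat2 using SD_herm by blast
qed

lemma schwarz2_fail:
  assumes "psd (SD a 0 1 0 0)" shows "0 \<le> a \<and> a \<le> 3/4"
proof -
  have P: "\<And>p q. 0 \<le> Re (Q (SD a 0 1 0 0 $$ (0,0)) (SD a 0 1 0 0 $$ (0,1)) (SD a 0 1 0 0 $$ (1,0)) (SD a 0 1 0 0 $$ (1,1)) p q)"
  proof -
    fix p q
    have "psd (mat2 (SD a 0 1 0 0 $$ (0,0)) (SD a 0 1 0 0 $$ (0,1)) (SD a 0 1 0 0 $$ (1,0)) (SD a 0 1 0 0 $$ (1,1)))"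
      using assms SD_mat2 by metis
    then show "0 \<le> Re (Q (SD a 0 1 0 0 $$ (0,0)) (SD a 0 1 0 0 $$ (0,1)) (SD a 0 1 0 0 $$ (1,0)) (SD a 0 1 0 0 $$ (1,1)) p q)"
      unfolding psd_mat2 by blast
  qed
  have Q4: "\<And>p q. 4 * Q (SD a 0 1 0 0 $$ (0,0)) (SD a 0 1 0 0 $$ (0,1)) (SD a 0 1 0 0 $$ (1,0)) (SD a 0 1 0 0 $$ (1,1)) p q
    = of_real a * N 0 1 0 0 (cnj q) (- cnj p) + of_real a * (3 - 4 * of_real a) * N 0 1 0 0 p q" by (rule SD_Q)
  have 1: "4 * Q (SD a 0 1 0 0 $$ (0,0)) (SD a 0 1 0 0 $$ (0,1)) (SD a 0 1 0 0 $$ (1,0)) (SD a 0 1 0 0 $$ (1,1)) 1 0 = 4 * of_real a"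
    unfolding Q4 by (simp add: N_def)
  have 2: "4 * Q (SD a 0 1 0 0 $$ (0,0)) (SD a 0 1 0 0 $$ (0,1)) (SD a 0 1 0 0 $$ (1,0)) (SD a 0 1 0 0 $$ (1,1)) 0 1 = 4 * of_real (a * (3 - 4*a))"
    unfolding Q4 by (simp add: N_def)
  have "0 \<le> a" using P[of 1 0] 1 by (metis Re_complex_of_real mult_cancel_left zero_neq_numeral)
  moreover have "0 \<le> a * (3 - 4*a)" using P[of 0 1] 2 by (metis Re_complex_of_real mult_cancel_left zero_neq_numeral)
  ultimately show ?thesis by (cases "a = 0") (auto simp: zero_le_mult_iff)
qed

lemma sum_2n: "(\<Sum>i<2*(n::nat). f i) = (\<Sum>p<n. f (2*p) + (f (2*p+1) :: 'a::comm_monoid_add))"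
  by (induct n) (simp_all add: algebra_simps)

definition G :: "complex mat \<Rightarrow> complex vec \<Rightarrow> nat \<Rightarrow> nat \<Rightarrow> complex" where
  "G A v p q = cnj (v$(2*p)) * (A$$(2*p,2*q) * v$(2*q) + A$$(2*p,2*q+1) * v$(2*q+1))
     + cnj (v$(2*p+1)) * (A$$(2*p+1,2*q) * v$(2*q) + A$$(2*p+1,2*q+1) * v$(2*q+1))"

lemma qf_block:
  assumes "A \<in> carrier_mat (2*n) (2*n)" "v \<in> carrier_vec (2*n)"
  shows "scalar_prod (conjugate v) (A *\<^sub>v v) = (\<Sum>p<n. \<Sum>q<n. G A v p q)"
  unfolding qf_expand[OF assms] sum_2n G_def
  by (simp add: sum_distrib_left sum.distrib algebra_simps)

definition Amp :: "real \<Rightarrow> nat \<Rightarrow> complex mat \<Rightarrow> complex mat" where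
  "Amp a n X = mat (2*n) (2*n) (\<lambda>(i,j). Phi2 a (X$$(2*(i div 2), 2*(j div 2))) (X$$(2*(i div 2), 2*(j div 2)+1))
     (X$$(2*(i div 2)+1, 2*(j div 2))) (X$$(2*(i div 2)+1, 2*(j div 2)+1)) $$ (i mod 2, j mod 2))"

lemma amp_Amp:
  assumes "\<alpha> \<noteq> 3"
  shows "ampliation n (Phi \<alpha>) X = Amp (2/(3-\<alpha>)) n X"
proof (rule eq_matI)
  fix i j assume ij: "i < dim_row (Amp (2/(3-\<alpha>)) n X)" "j < dim_col (Amp (2/(3-\<alpha>)) n X)"
  let ?B = "mat 2 2 (\<lambda>(c, d). X $$ (2 * (i div 2) + c, 2 * (j div 2) + d))"
  have B: "?B = mat2 (X$$(2*(i div 2), 2*(j div 2))) (X$$(2*(i div 2), 2*(j div 2)+1))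
     (X$$(2*(i div 2)+1, 2*(j div 2))) (X$$(2*(i div 2)+1, 2*(j div 2)+1))"
    by (subst mat2_eta[of ?B]) auto
  show "ampliation n (Phi \<alpha>) X $$ (i, j) = Amp (2/(3-\<alpha>)) n X $$ (i, j)"
    using ij unfolding ampliation_def Amp_def by (simp add: B Phi_mat2[OF assms] Phi2_def Let_def)
qed (auto simp: ampliation_def Amp_def)

lemma Amp_carrier[simp]: "Amp a n X \<in> carrier_mat (2*n) (2*n)" "dim_row (Amp a n X) = 2*n" "dim_col (Amp a n X) = 2*n"
  by (simp_all add: Amp_def)

lemma Amp_idx:
  assumes "p < n" "q < n"
  shows "Amp a n X $$ (2*p, 2*q) = (1 - of_real a) * X$$(2*p,2*q) + of_real a * X$$(2*p+1,2*q+1)"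
    "Amp a n X $$ (2*p, 2*q+1) = (1 - 2*of_real a) * X$$(2*p,2*q+1)"
    "Amp a n X $$ (2*p+1, 2*q) = (1 - 2*of_real a) * X$$(2*p+1,2*q)"
    "Amp a n X $$ (2*p+1, 2*q+1) = of_real a * X$$(2*p,2*q) + (1 - of_real a) * X$$(2*p+1,2*q+1)"
  using assms by (simp_all add: Amp_def Phi2_def)

lemma Amp_idx':
  assumes "p < n" "q < n"
  shows "Amp a n X $$ (2*p, Suc (2*q)) = (1 - 2*of_real a) * X$$(2*p,Suc (2*q))"
    "Amp a n X $$ (Suc (2*p), 2*q) = (1 - 2*of_real a) * X$$(Suc (2*p),2*q)"
    "Amp a n X $$ (Suc (2*p), Suc (2*q)) = of_real a * X$$(2*p,2*q) + (1 - of_real a) * X$$(Suc (2*p),Suc (2*q))"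
  using Amp_idx[OF assms] by simp_all

definition U1 :: "nat \<Rightarrow> complex vec \<Rightarrow> complex vec" where
  "U1 n v = vec (2*n) (\<lambda>i. if even i then v$(i+1) else v$(i-1))"
definition U2 :: "nat \<Rightarrow> complex vec \<Rightarrow> complex vec" where
  "U2 n v = vec (2*n) (\<lambda>i. if even i then - \<i> * v$(i+1) else \<i> * v$(i-1))"
definition U3 :: "nat \<Rightarrow> complex vec \<Rightarrow> complex vec" where
  "U3 n v = vec (2*n) (\<lambda>i. if even i then v$i else - v$i)"

lemma U_carrier[simp]: "U1 n v \<in> carrier_vec (2*n)" "U2 n v \<in> carrier_vec (2*n)" "U3 n v \<in> carrier_vec (2*n)"
  by (simp_all add: U1_def U2_def U3_def)

lemma U_idx:
  assumes "p < n"
  shows "U1 n v $ (2*p) = v$(2*p+1)" "U1 n v $ (2*p+1) = v$(2*p)"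
    "U2 n v $ (2*p) = - \<i> * v$(2*p+1)" "U2 n v $ (2*p+1) = \<i> * v$(2*p)"
    "U3 n v $ (2*p) = v$(2*p)" "U3 n v $ (2*p+1) = - v$(2*p+1)"
  using assms by (simp_all add: U1_def U2_def U3_def)

lemma G_ident:
  assumes "p < n" "q < n"
  shows "2 * G (Amp a n X) v p q = (2 - 3 * of_real a) * G X v p q
    + of_real a * (G X (U1 n v) p q + G X (U2 n v) p q + G X (U3 n v) p q)"
  unfolding G_def Amp_idx[OF assms] U_idx[OF assms(1)] U_idx[OF assms(2)]
  by (simp add: algebra_simps)

lemma adj_idx:
  assumes "A \<in> carrier_mat m m" "i < m" "j < m"
  shows "mat_adjoint A $$ (i,j) = cnj (A$$(j,i))"
  using assms by (simp add: mat_adjoint_def mat_of_rows_def)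

lemma idx_split: "i < 2*n \<Longrightarrow> \<exists>p r. i = 2*p + r \<and> p < n \<and> (r = 0 \<or> r = (1::nat))"
  by (rule exI[of _ "i div 2"], rule exI[of _ "i mod 2"]) auto

lemma Amp_herm:
  assumes X: "X \<in> carrier_mat (2*n) (2*n)" and H: "mat_adjoint X = X"
  shows "mat_adjoint (Amp a n X) = Amp a n X"
proof -
  have XH: "X$$(k,l) = cnj (X$$(l,k))" if "k < 2*n" "l < 2*n" for k l
    using adj_idx[OF X that] H by simp
  show ?thesis
  proof (rule eq_matI)
    fix i j assume "i < dim_row (Amp a n X)" "j < dim_col (Amp a n X)"
    then have ij: "i < 2*n" "j < 2*n" by auto
    obtain p r where i: "i = 2*p+r" "p < n" "r = 0 \<or> r = 1" using idx_split[OF ij(1)] by blast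
    obtain q s where j: "j = 2*q+s" "q < n" "s = 0 \<or> s = 1" using idx_split[OF ij(2)] by blast
    have b: "2*p < 2*n" "Suc (2*p) < 2*n" "2*q < 2*n" "Suc (2*q) < 2*n" using i j by auto
    have "cnj (Amp a n X $$ (j, i)) = Amp a n X $$ (i, j)"
      using i(3) j(3) unfolding i(1) j(1)
      by (auto simp: Amp_idx[OF i(2) j(2)] Amp_idx[OF j(2) i(2)] XH[OF b(3) b(1)] XH[OF b(3) b(2)]
          XH[OF b(4) b(1)] XH[OF b(4) b(2)] Amp_idx'[OF i(2) j(2)] Amp_idx'[OF j(2) i(2)])
    then show "mat_adjoint (Amp a n X) $$ (i, j) = Amp a n X $$ (i, j)"
      using adj_idx[OF Amp_carrier(1) ij] by simp
  qed (auto simp: mat_adjoint_def)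
qed

lemma cp_pos:
  assumes a: "0 \<le> a" "a \<le> 2/3" and X: "X \<in> carrier_mat (2*n) (2*n)" and P: "psd X"
  shows "psd (Amp a n X)"
proof -
  have H: "mat_adjoint X = X" and Q: "\<And>u. u \<in> carrier_vec (2*n) \<Longrightarrow> 0 \<le> Re (scalar_prod (conjugate u) (X *\<^sub>v u))"
    using P X unfolding psd_def by auto
  have "0 \<le> Re (scalar_prod (conjugate v) (Amp a n X *\<^sub>v v))" if v: "v \<in> carrier_vec (2*n)" for v
  proof -
    let ?q = "\<lambda>u. scalar_prod (conjugate u) (X *\<^sub>v u)"
    have "2 * scalar_prod (conjugate v) (Amp a n X *\<^sub>v v) = (\<Sum>p<n. \<Sum>q<n. 2 * G (Amp a n X) v p q)"
      by (simp add: qf_block[OF Amp_carrier(1) v] sum_distrib_left)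
    also have "\<dots> = (\<Sum>p<n. \<Sum>q<n. (2 - 3 * of_real a) * G X v p q
       + of_real a * (G X (U1 n v) p q + G X (U2 n v) p q + G X (U3 n v) p q))"
      by (intro sum.cong refl) (simp add: G_ident)
    also have "\<dots> = (2 - 3 * of_real a) * (\<Sum>p<n. \<Sum>q<n. G X v p q)
       + of_real a * ((\<Sum>p<n. \<Sum>q<n. G X (U1 n v) p q) + (\<Sum>p<n. \<Sum>q<n. G X (U2 n v) p q)
          + (\<Sum>p<n. \<Sum>q<n. G X (U3 n v) p q))"
      by (simp add: sum.distrib sum_distrib_left distrib_left)
    also have "\<dots> = of_real (2 - 3*a) * ?q v + of_real a * (?q (U1 n v) + ?q (U2 n v) + ?q (U3 n v))"
      by (simp add: qf_block[OF X v] qf_block[OF X U_carrier(1)] qf_block[OF X U_carrier(2)] qf_block[OF X U_carrier(3)])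
    finally have e: "2 * Re (scalar_prod (conjugate v) (Amp a n X *\<^sub>v v))
      = (2 - 3*a) * Re (?q v) + a * (Re (?q (U1 n v)) + Re (?q (U2 n v)) + Re (?q (U3 n v)))"
      by (metis (no_types, lifting) Re_ofreal_mult plus_complex.sel(1) Re_complex_of_real mult_2 plus_complex.sel(1))
    have "0 \<le> (2 - 3*a) * Re (?q v) + a * (Re (?q (U1 n v)) + Re (?q (U2 n v)) + Re (?q (U3 n v)))"
      using a Q[OF v] Q[OF U_carrier(1)] Q[OF U_carrier(2)] Q[OF U_carrier(3)]
      by (intro add_nonneg_nonneg mult_nonneg_nonneg) auto
    then show ?thesis using e by linarith
  qed
  then show ?thesis unfolding psd_def using Amp_herm[OF X H] by (simp add: square_mat.simps)
qed

definition X4 :: "complex mat" where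
  "X4 = mat 4 4 (\<lambda>(i,j). if (i = 0 \<or> i = 3) \<and> (j = 0 \<or> j = 3) then 1 else 0)"

lemma X4_carrier: "X4 \<in> carrier_mat (2*2) (2*2)" by (simp add: X4_def)

lemma X4_psd: "psd X4"
proof -
  have H: "mat_adjoint X4 = X4"
    by (rule eq_matI) (auto simp: X4_def mat_adjoint_def mat_of_rows_def)
  have "0 \<le> Re (scalar_prod (conjugate v) (X4 *\<^sub>v v))" if v: "v \<in> carrier_vec (2*2)" for v
  proof -
    have "scalar_prod (conjugate v) (X4 *\<^sub>v v) = cnj (v$0 + v$3) * (v$0 + v$3)"
      unfolding qf_block[OF X4_carrier v] by (simp add: sum2' G_def X4_def algebra_simps numeral_3_eq_3)
    then show ?thesis using Re_cnj_sq[of "v$0 + v$3"] by (simp only: complex_cnj_add)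
  qed
  then show ?thesis unfolding psd_def using H by (simp add: X4_def square_mat.simps)
qed

lemma cp_fail:
  assumes "psd (Amp a 2 X4)" shows "0 \<le> a \<and> a \<le> 2/3"
proof -
  have P: "\<And>v. v \<in> carrier_vec (2*2) \<Longrightarrow> 0 \<le> Re (scalar_prod (conjugate v) (Amp a 2 X4 *\<^sub>v v))"
    using assms unfolding psd_def by simp
  define e1 :: "complex vec" where "e1 = vec (2*2) (\<lambda>i. if i = 1 then 1 else 0)"
  define e2 :: "complex vec" where "e2 = vec (2*2) (\<lambda>i. if i = 0 \<or> i = 3 then 1 else 0)"
  have c: "e1 \<in> carrier_vec (2*2)" "e2 \<in> carrier_vec (2*2)" by (simp_all add: e1_def e2_def)
  have 1: "scalar_prod (conjugate e1) (Amp a 2 X4 *\<^sub>v e1) = of_real a"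
    unfolding qf_block[OF Amp_carrier(1) c(1)] by (simp add: sum2' G_def Amp_def Phi2_def X4_def e1_def)
  have 2: "scalar_prod (conjugate e2) (Amp a 2 X4 *\<^sub>v e2) = of_real (4 - 6*a)"
    unfolding qf_block[OF Amp_carrier(1) c(2)] by (simp add: sum2' G_def Amp_def Phi2_def X4_def e2_def)
  show ?thesis using P[OF c(1)] P[OF c(2)] 1 2 by simp
qed

lemma a_cond:
  fixes \<alpha> c t :: real
  assumes "\<alpha> \<noteq> 3" "c > 0" "2 = c * (3 - t)"
  shows "(0 \<le> 2/(3-\<alpha>) \<and> 2/(3-\<alpha>) \<le> c) \<longleftrightarrow> \<alpha> \<le> t"
proof (cases "\<alpha> < 3")
  case True
  then have p: "0 < 3 - \<alpha>" by simp
  have "2/(3-\<alpha>) \<le> c \<longleftrightarrow> 2 \<le> c * (3 - \<alpha>)" using p by (simp add: divide_le_eq)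
  also have "\<dots> \<longleftrightarrow> c * (3 - t) \<le> c * (3 - \<alpha>)" using assms(3) by simp
  also have "\<dots> \<longleftrightarrow> 3 - t \<le> 3 - \<alpha>" using assms(2) by (rule mult_le_cancel_left_pos)
  also have "\<dots> \<longleftrightarrow> \<alpha> \<le> t" by simp
  finally show ?thesis using p by simp
next
  case False
  then have "2/(3-\<alpha>) < 0" "\<alpha> > 3" using assms(1) by (auto simp: divide_neg_pos)
  moreover have "t < 3"
  proof (rule ccontr)
    assume "\<not> t < 3"
    then have "c * (3 - t) \<le> 0" using assms(2) by (intro mult_nonneg_nonpos) auto
    then show False using assms(3) by simp
  qed
  ultimately show ?thesis by auto
qed

lemma Phi_Phi2: "\<alpha> \<noteq> 3 \<Longrightarrow> Phi \<alpha> (mat2 x y z w) = Phi2 (2/(3-\<alpha>)) x y z w"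
  by (simp add: Phi_mat2 Phi2_def Let_def)

lemma Phi_SD: "\<alpha> \<noteq> 3 \<Longrightarrow> Phi \<alpha> (mat_adjoint (mat2 x y z w) * mat2 x y z w) - Phi \<alpha> (mat_adjoint (mat2 x y z w)) * Phi \<alpha> (mat2 x y z w)
   = SD (2/(3-\<alpha>)) x y z w"
  unfolding SD_def Let_def mat2_adj mat2_mult Phi_Phi2 mat2_idx by simp

lemma E00_psd: "psd (mat2 1 0 0 0)"
  unfolding psd_mat2 Q_def using Re_cnj_sq by simp

theorem corollary4:
  fixes \<alpha> :: real
  assumes "\<alpha> \<noteq> 3"
  shows "(positive_map (Phi \<alpha>) \<longleftrightarrow> \<alpha> \<le> 1)
       \<and> (schwarz_map (Phi \<alpha>) \<longleftrightarrow> \<alpha> \<le> 1/3)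
       \<and> (completely_positive (Phi \<alpha>) \<longleftrightarrow> \<alpha> \<le> 0)"
proof (intro conjI)
  define a where "a = 2/(3-\<alpha>)"
  have c1: "(0 \<le> a \<and> a \<le> 1) \<longleftrightarrow> \<alpha> \<le> 1" unfolding a_def by (rule a_cond[OF assms]) auto
  have c2: "(0 \<le> a \<and> a \<le> 3/4) \<longleftrightarrow> \<alpha> \<le> 1/3" unfolding a_def by (rule a_cond[OF assms]) auto
  have c3: "(0 \<le> a \<and> a \<le> 2/3) \<longleftrightarrow> \<alpha> \<le> 0" unfolding a_def by (rule a_cond[OF assms]) auto
  show "positive_map (Phi \<alpha>) \<longleftrightarrow> \<alpha> \<le> 1"
  proof
    assume "positive_map (Phi \<alpha>)"
    then have "psd (Phi \<alpha> (mat2 1 0 0 0))" unfolding positive_map_def using E00_psd by auto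
    then have "psd (Phi2 a 1 0 0 0)" unfolding a_def Phi_Phi2[OF assms] .
    then show "\<alpha> \<le> 1" using positive2_fail c1 by blast
  next
    assume "\<alpha> \<le> 1"
    then have a: "0 \<le> a" "a \<le> 1" using c1 by auto
    show "positive_map (Phi \<alpha>)" unfolding positive_map_def
    proof (intro ballI impI)
      fix X :: "complex mat" assume X: "X \<in> carrier_mat 2 2" and P: "psd X"
      obtain x y z w where XE: "X = mat2 x y z w" using mat2_eta[OF X] by blast
      show "psd (Phi \<alpha> X)" unfolding XE Phi_Phi2[OF assms] a_def[symmetric]
        using positive2[OF a] P unfolding XE by blast
    qed
  qed
  show "schwarz_map (Phi \<alpha>) \<longleftrightarrow> \<alpha> \<le> 1/3"
  proof
    assume "schwarz_map (Phi \<alpha>)"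
    then have "psd (Phi \<alpha> (mat_adjoint (mat2 0 1 0 0) * mat2 0 1 0 0) - Phi \<alpha> (mat_adjoint (mat2 0 1 0 0)) * Phi \<alpha> (mat2 0 1 0 0))"
      unfolding schwarz_map_def using mat2_carrier(1) by blast
    then have "psd (SD a 0 1 0 0)" unfolding Phi_SD[OF assms] a_def .
    then show "\<alpha> \<le> 1/3" using schwarz2_fail c2 by blast
  next
    assume "\<alpha> \<le> 1/3"
    then have a: "0 \<le> a" "a \<le> 3/4" using c2 by auto
    show "schwarz_map (Phi \<alpha>)" unfolding schwarz_map_def
    proof
      fix X :: "complex mat" assume X: "X \<in> carrier_mat 2 2"
      obtain x y z w where XE: "X = mat2 x y z w" using mat2_eta[OF X] by blast
      show "psd (Phi \<alpha> (mat_adjoint X * X) - Phi \<alpha> (mat_adjoint X) * Phi \<alpha> X)"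
        unfolding XE Phi_SD[OF assms] a_def[symmetric] using schwarz2[OF a] .
    qed
  qed
  show "completely_positive (Phi \<alpha>) \<longleftrightarrow> \<alpha> \<le> 0"
  proof
    assume "completely_positive (Phi \<alpha>)"
    then have "psd (ampliation 2 (Phi \<alpha>) X4)" unfolding completely_positive_def
      using X4_carrier X4_psd by blast
    then have "psd (Amp a 2 X4)" unfolding a_def amp_Amp[OF assms] .
    then show "\<alpha> \<le> 0" using cp_fail c3 by blast
  next
    assume "\<alpha> \<le> 0"
    then have a: "0 \<le> a" "a \<le> 2/3" using c3 by auto
    show "completely_positive (Phi \<alpha>)" unfolding completely_positive_def
      using cp_pos[OF a] unfolding a_def amp_Amp[OF assms] by blast
  qed
qed

end
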